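(* Let $d\ge1$ be an integer and let $G$ be a triangle-free graph on $n$ vertices with maximum degree $d$. Then for all $\lambda>0$, writing $w=W(d\log(1+\lambda))$, \[ P_G(\lambda) \;\ge\; \exp\!\left(\left[w^2+2w\right]\frac{n}{2d}\right). \] In particular (taking $\lambda=1$), for every $\varepsilon>0$ there is $d_0$ such that if $d\ge d_0$ then $G$ has at least $\exp\!\left[\left(\frac12-\varepsilon\right)\frac{\log^2 d}{d}n\right]$ independent sets.
   Context: For a graph $G$, $P_G(\lambda)=\sum_{J}\lambda^{|J|}$, the sum over all independent sets $J$ of $G$ (including the empty set), is the hard-core partition function (independence polynomial). For $z>0$, $W(z)$ denotes the unique positive real with $W(z)e^{W(z)}=z$. Logarithms are natural. *)

theory Defs
  imports Complex_Main
begin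

definition simple_graph :: "'a set \<Rightarrow> ('a \<Rightarrow> 'a \<Rightarrow> bool) \<Rightarrow> bool" where
  "simple_graph V E \<longleftrightarrow> finite V \<and> (\<forall>u v. E u v \<longrightarrow> E v u)
     \<and> (\<forall>v. \<not> E v v) \<and> (\<forall>u v. E u v \<longrightarrow> u \<in> V \<and> v \<in> V)"

definition degree :: "'a set \<Rightarrow> ('a \<Rightarrow> 'a \<Rightarrow> bool) \<Rightarrow> 'a \<Rightarrow> nat" where
  "degree V E v = card {u \<in> V. E v u}"

definition max_degree_eq :: "'a set \<Rightarrow> ('a \<Rightarrow> 'a \<Rightarrow> bool) \<Rightarrow> nat \<Rightarrow> bool" where
  "max_degree_eq V E d \<longleftrightarrow> (\<forall>v\<in>V. degree V E v \<le> d) \<and> (\<exists>v\<in>V. degree V E v = d)"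

definition triangle_free :: "'a set \<Rightarrow> ('a \<Rightarrow> 'a \<Rightarrow> bool) \<Rightarrow> bool" where
  "triangle_free V E \<longleftrightarrow> \<not> (\<exists>a\<in>V. \<exists>b\<in>V. \<exists>c\<in>V. E a b \<and> E b c \<and> E a c)"

definition independent_set :: "'a set \<Rightarrow> ('a \<Rightarrow> 'a \<Rightarrow> bool) \<Rightarrow> 'a set \<Rightarrow> bool" where
  "independent_set V E J \<longleftrightarrow> J \<subseteq> V \<and> (\<forall>u\<in>J. \<forall>v\<in>J. \<not> E u v)"

definition hardcore_pf :: "'a set \<Rightarrow> ('a \<Rightarrow> 'a \<Rightarrow> bool) \<Rightarrow> real \<Rightarrow> real" where
  "hardcore_pf V E lam = (\<Sum>J\<in>{J. independent_set V E J}. lam ^ card J)"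

definition lambertW :: "real \<Rightarrow> real" where
  "lambertW z = (THE w. w > 0 \<and> w * exp w = z)"

end

theory Submission
  imports Defs
begin


lemma sum_Pow_insert:
  assumes "finite A" "a \<notin> A"
  shows "(\<Sum>S\<in>Pow (insert a A). f S) = (\<Sum>S\<in>Pow A. f S) + (\<Sum>S\<in>Pow A. f (insert a S))"
proof -
  have inj: "inj_on (insert a) (Pow A)" using assms(2) by (auto simp: inj_on_def)
  have disj: "Pow A \<inter> insert a ` Pow A = {}" using assms(2) by auto
  have "(\<Sum>S\<in>Pow (insert a A). f S) = (\<Sum>S\<in>Pow A. f S) + (\<Sum>S\<in>insert a ` Pow A. f S)"
    unfolding Pow_insert using assms(1) disj by (intro sum.union_disjoint) auto
  also have "(\<Sum>S\<in>insert a ` Pow A. f S) = (\<Sum>S\<in>Pow A. f (insert a S))"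
    using inj by (simp add: sum.reindex)
  finally show ?thesis .
qed

lemma card_filter_sum:
  assumes "finite A"
  shows "card {x\<in>A. P x} = (\<Sum>x\<in>A. if P x then 1 else 0)"
proof -
  have "(\<Sum>x\<in>A. if P x then 1 else (0::nat)) = card (A \<inter> {x. P x})"
    using assms by (simp add: sum.If_cases)
  also have "A \<inter> {x. P x} = {x\<in>A. P x}" by auto
  finally show ?thesis by simp
qed

lemma pow_sums:
  fixes t :: real
  assumes "finite A"
  shows "(\<Sum>S\<in>Pow A. t ^ card S) = (1+t) ^ card A \<and>
         (1+t) * (\<Sum>S\<in>Pow A. real (card S) * t ^ card S) = real (card A) * t * (1+t) ^ card A"
  using assms
proof (induction A rule: finite_induct)
  case empty
  then show ?case by simp
next
  case (insert a A)
  have c: "\<And>S. S \<in> Pow A \<Longrightarrow> card (insert a S) = Suc (card S)"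
    using insert by (meson PowD card_insert_disjoint finite_subset in_mono)
  define R where "R = (\<Sum>S\<in>Pow A. t ^ card S)"
  define Q where "Q = (\<Sum>S\<in>Pow A. real (card S) * t ^ card S)"
  have 1: "(\<Sum>S\<in>Pow (insert a A). t ^ card S) = R + t * R"
    unfolding R_def using insert(1,2) c by (simp add: sum_Pow_insert sum_distrib_left[symmetric])
  have 2: "(\<Sum>S\<in>Pow (insert a A). real (card S) * t ^ card S) = Q + t * Q + t * R"
    unfolding R_def Q_def using insert(1,2) c
    by (simp add: sum_Pow_insert sum_distrib_left sum.distrib algebra_simps)
  have IH: "R = (1+t) ^ card A" "(1+t) * Q = real (card A) * t * (1+t) ^ card A"
    using insert.IH unfolding R_def Q_def by auto
  have 3: "(1+t) * (Q + t * Q + t * R) = (1+t) * ((1+t) * Q) + t * (1+t) * R" by (simp add: algebra_simps)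
  have 4: "(1+t) * ((1+t) * Q) = (1+t) * (real (card A) * t * (1+t) ^ card A)" using IH(2) by simp
  have "(1+t) * (\<Sum>S\<in>Pow (insert a A). real (card S) * t ^ card S) = real (card (insert a A)) * t * (1+t) ^ card (insert a A)"
    unfolding 2 3 4 using IH(1) insert(1,2) by (simp add: algebra_simps)
  then show ?case using 1 IH insert(1,2) by (simp add: algebra_simps)
qed

locale tfg =
  fixes V :: "'a set" and E :: "'a \<Rightarrow> 'a \<Rightarrow> bool" and d :: nat
  assumes G: "simple_graph V E" and tf: "triangle_free V E"
    and deg: "\<forall>v\<in>V. degree V E v \<le> d"
begin

definition IS where "IS = {J. independent_set V E J}"
definition nb where "nb v = {u\<in>V. E v u}"

lemma finV: "finite V" using G by (simp add: simple_graph_def)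
lemma symE: "E u v \<Longrightarrow> E v u" using G by (simp add: simple_graph_def)
lemma irrE: "\<not> E v v" using G by (simp add: simple_graph_def)
lemma inV: "E u v \<Longrightarrow> u \<in> V \<and> v \<in> V" using G by (simp add: simple_graph_def)

lemma IS_sub: "I \<in> IS \<Longrightarrow> I \<subseteq> V" by (simp add: IS_def independent_set_def)
lemma IS_fin: "I \<in> IS \<Longrightarrow> finite I" using IS_sub finV finite_subset by blast
lemma IS_ind: "I \<in> IS \<Longrightarrow> u \<in> I \<Longrightarrow> w \<in> I \<Longrightarrow> \<not> E u w" by (simp add: IS_def independent_set_def)
lemma finite_IS: "finite IS"
proof -
  have "IS \<subseteq> Pow V" using IS_sub by auto
  then show ?thesis using finV finite_subset by blast
qed

lemma lemA:
  fixes t :: real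
  assumes v: "v \<in> V"
  shows "(1+t) * (\<Sum>I\<in>{I\<in>IS. v\<in>I}. t^card I) = t * (\<Sum>I\<in>{I\<in>IS. I \<inter> nb v = {}}. t^card I)"
proof -
  define B where "B = {I\<in>IS. v \<notin> I \<and> I \<inter> nb v = {}}"
  define S1 where "S1 = (\<Sum>I\<in>{I\<in>IS. v\<in>I}. t^card I)"
  have fB: "finite B" unfolding B_def using finite_IS by simp
  have f1: "finite {I\<in>IS. v\<in>I}" using finite_IS by simp
  have split: "{I\<in>IS. I \<inter> nb v = {}} = {I\<in>IS. v\<in>I} \<union> B"
    unfolding B_def nb_def using IS_ind by auto
  have bij: "bij_betw (insert v) B {I\<in>IS. v\<in>I}"
  proof (rule bij_betw_byWitness[where f' = "\<lambda>I. I - {v}"])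
    show "\<forall>a\<in>B. insert v a - {v} = a" unfolding B_def by auto
    show "\<forall>a'\<in>{I \<in> IS. v \<in> I}. insert v (a' - {v}) = a'" by auto
    show "insert v ` B \<subseteq> {I \<in> IS. v \<in> I}"
    proof
      fix J assume "J \<in> insert v ` B"
      then obtain I where I: "I \<in> IS" "v \<notin> I" "I \<inter> nb v = {}" "J = insert v I" unfolding B_def by auto
      have "independent_set V E J" unfolding independent_set_def
        using I IS_sub[OF I(1)] IS_ind[OF I(1)] v irrE symE inV unfolding nb_def by blast
      then show "J \<in> {I \<in> IS. v \<in> I}" using I by (simp add: IS_def)
    qed
    show "(\<lambda>I. I - {v}) ` {I \<in> IS. v \<in> I} \<subseteq> B"
    proof
      fix J assume "J \<in> (\<lambda>I. I - {v}) ` {I \<in> IS. v \<in> I}"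
      then obtain I where I: "I \<in> IS" "v \<in> I" "J = I - {v}" by auto
      have "independent_set V E J" unfolding independent_set_def
        using I IS_sub[OF I(1)] IS_ind[OF I(1)] by blast
      moreover have "J \<inter> nb v = {}" using I IS_ind[OF I(1)] unfolding nb_def by auto
      ultimately show "J \<in> B" using I by (simp add: IS_def B_def)
    qed
  qed
  have "S1 = (\<Sum>I\<in>B. t^card (insert v I))"
    unfolding S1_def using sum.reindex_bij_betw[OF bij, of "\<lambda>I. t^card I"] by simp
  also have "\<dots> = t * (\<Sum>I\<in>B. t^card I)"
    unfolding sum_distrib_left
    by (rule sum.cong) (auto simp: B_def IS_fin)
  finally have S1: "S1 = t * (\<Sum>I\<in>B. t^card I)" .
  have "(\<Sum>I\<in>{I\<in>IS. I \<inter> nb v = {}}. t^card I) = S1 + (\<Sum>I\<in>B. t^card I)"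
    unfolding split S1_def using fB f1 by (intro sum.union_disjoint) (auto simp: B_def)
  then show ?thesis using S1 unfolding S1_def[symmetric] by (simp add: algebra_simps)
qed

lemma sumA:
  fixes t :: real
  shows "(\<Sum>v\<in>V. \<Sum>I\<in>{I\<in>IS. v\<in>I}. t^card I) = (\<Sum>I\<in>IS. real (card I) * t^card I)"
proof -
  have "(\<Sum>v\<in>V. \<Sum>I\<in>{I\<in>IS. v\<in>I}. t^card I) = (\<Sum>v\<in>V. \<Sum>I\<in>IS. if v \<in> I then t^card I else 0)"
    using finite_IS by (simp add: sum.inter_filter)
  also have "\<dots> = (\<Sum>I\<in>IS. \<Sum>v\<in>V. if v \<in> I then t^card I else 0)" by (rule sum.swap)
  also have "\<dots> = (\<Sum>I\<in>IS. real (card I) * t^card I)"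
  proof (rule sum.cong)
    fix I assume I: "I \<in> IS"
    have "(\<Sum>v\<in>V. if v \<in> I then t^card I else 0) = (\<Sum>v\<in>{v\<in>V. v\<in>I}. t^card I)"
      using finV by (simp add: sum.inter_filter[symmetric])
    also have "{v\<in>V. v\<in>I} = I" using IS_sub[OF I] by auto
    finally show "(\<Sum>v\<in>V. if v \<in> I then t^card I else 0) = real (card I) * t^card I" by simp
  qed simp
  finally show ?thesis .
qed

lemma lemC:
  fixes t :: real
  assumes "t \<ge> 0"
  shows "(\<Sum>v\<in>V. \<Sum>I\<in>IS. real (card (I \<inter> nb v)) * t^card I) \<le> real d * (\<Sum>I\<in>IS. real (card I) * t^card I)"
proof -
  have key: "(\<Sum>v\<in>V. card (I \<inter> nb v)) \<le> d * card I" if I: "I \<in> IS" for I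
  proof -
    have "(\<Sum>v\<in>V. card (I \<inter> nb v)) = (\<Sum>v\<in>V. \<Sum>u\<in>I. if E v u then 1 else 0)"
    proof (rule sum.cong)
      fix v assume "v \<in> V"
      have "I \<inter> nb v = {u\<in>I. E v u}" using IS_sub[OF I] unfolding nb_def by auto
      then show "card (I \<inter> nb v) = (\<Sum>u\<in>I. if E v u then 1 else 0)"
        using card_filter_sum[OF IS_fin[OF I]] by simp
    qed simp
    also have "\<dots> = (\<Sum>u\<in>I. \<Sum>v\<in>V. if E v u then 1 else 0)" by (rule sum.swap)
    also have "\<dots> \<le> (\<Sum>u\<in>I. d)"
    proof (rule sum_mono)
      fix u assume u: "u \<in> I"
      have "(\<Sum>v\<in>V. if E v u then 1 else 0) = card {v\<in>V. E v u}"
        using card_filter_sum[OF finV] by simp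
      also have "{v\<in>V. E v u} = {v\<in>V. E u v}" using symE by blast
      also have "card \<dots> = degree V E u" by (simp add: degree_def)
      also have "\<dots> \<le> d" using deg IS_sub[OF I] u by auto
      finally show "(\<Sum>v\<in>V. if E v u then 1 else 0) \<le> d" .
    qed
    finally show ?thesis by (simp add: mult.commute)
  qed
  have "(\<Sum>v\<in>V. \<Sum>I\<in>IS. real (card (I \<inter> nb v)) * t^card I) = (\<Sum>I\<in>IS. \<Sum>v\<in>V. real (card (I \<inter> nb v)) * t^card I)"
    by (rule sum.swap)
  also have "\<dots> = (\<Sum>I\<in>IS. real (\<Sum>v\<in>V. card (I \<inter> nb v)) * t^card I)"
    by (simp add: sum_distrib_right)
  also have "\<dots> \<le> (\<Sum>I\<in>IS. real (d * card I) * t^card I)"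
    by (rule sum_mono, rule mult_right_mono) (use key assms in \<open>auto simp del: of_nat_sum of_nat_mult\<close>)
  also have "\<dots> = real d * (\<Sum>I\<in>IS. real (card I) * t^card I)"
    by (simp add: sum_distrib_left algebra_simps)
  finally show ?thesis .
qed

definition Ks where "Ks v = {I\<in>IS. I \<inter> nb v = {}}"
definition Av where "Av v K = {u\<in>nb v. \<forall>k\<in>K. \<not> E u k}"

lemma decomp:
  assumes v: "v \<in> V"
  shows "(\<Sum>I\<in>IS. g I) = (\<Sum>K\<in>Ks v. \<Sum>S\<in>Pow (Av v K). g (K \<union> S))"
proof -
  have fK: "finite (Ks v)" unfolding Ks_def using finite_IS by simp
  have fA: "finite (Av v K)" for K unfolding Av_def nb_def using finV by simp
  have "(\<Sum>K\<in>Ks v. \<Sum>S\<in>Pow (Av v K). g (K \<union> S)) = (\<Sum>(K,S)\<in>Sigma (Ks v) (\<lambda>K. Pow (Av v K)). g (K \<union> S))"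
    using fK fA by (intro sum.Sigma) auto
  also have "\<dots> = (\<Sum>I\<in>IS. g I)"
  proof -
    have bij: "bij_betw (\<lambda>(K,S). K \<union> S) (Sigma (Ks v) (\<lambda>K. Pow (Av v K))) IS"
    proof (rule bij_betw_byWitness[where f' = "\<lambda>I. (I - nb v, I \<inter> nb v)"])
      show "\<forall>a\<in>Sigma (Ks v) (\<lambda>K. Pow (Av v K)). (\<lambda>I. (I - nb v, I \<inter> nb v)) ((\<lambda>(K, S). K \<union> S) a) = a"
        unfolding Ks_def Av_def by auto
      show "\<forall>a'\<in>IS. (\<lambda>(K, S). K \<union> S) (a' - nb v, a' \<inter> nb v) = a'" by auto
      show "(\<lambda>(K, S). K \<union> S) ` Sigma (Ks v) (\<lambda>K. Pow (Av v K)) \<subseteq> IS"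
      proof
        fix J assume "J \<in> (\<lambda>(K, S). K \<union> S) ` Sigma (Ks v) (\<lambda>K. Pow (Av v K))"
        then obtain K S where KS: "K \<in> Ks v" "S \<subseteq> Av v K" "J = K \<union> S" by auto
        have K: "K \<in> IS" using KS unfolding Ks_def by auto
        have SV: "S \<subseteq> V" using KS(2) unfolding Av_def nb_def by auto
        have nbS: "\<And>u. u \<in> S \<Longrightarrow> E v u" using KS(2) unfolding Av_def nb_def by auto
        have SK: "\<And>u k. u \<in> S \<Longrightarrow> k \<in> K \<Longrightarrow> \<not> E u k" using KS(2) unfolding Av_def by auto
        have SS: "\<not> E x y" if "x \<in> S" "y \<in> S" for x y
        proof
          assume "E x y"
          then have "E v x \<and> E x y \<and> E v y" using nbS that by auto
          then show False using tf v inV unfolding triangle_free_def by blast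
        qed
        have "independent_set V E J" unfolding independent_set_def KS(3)
          using IS_sub[OF K] SV IS_ind[OF K] SK SS symE by blast
        then show "J \<in> IS" by (simp add: IS_def)
      qed
      show "(\<lambda>I. (I - nb v, I \<inter> nb v)) ` IS \<subseteq> Sigma (Ks v) (\<lambda>K. Pow (Av v K))"
      proof
        fix x assume "x \<in> (\<lambda>I. (I - nb v, I \<inter> nb v)) ` IS"
        then obtain I where I: "I \<in> IS" "x = (I - nb v, I \<inter> nb v)" by auto
        have "independent_set V E (I - nb v)" using IS_sub[OF I(1)] IS_ind[OF I(1)]
          unfolding independent_set_def by blast
        then have "I - nb v \<in> Ks v" unfolding Ks_def IS_def by auto
        moreover have "I \<inter> nb v \<subseteq> Av v (I - nb v)" using IS_ind[OF I(1)] unfolding Av_def by auto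
        ultimately show "x \<in> Sigma (Ks v) (\<lambda>K. Pow (Av v K))" using I by auto
      qed
    qed
    show ?thesis using sum.reindex_bij_betw[OF bij, of g] by (simp add: case_prod_unfold)
  qed
  finally show ?thesis by simp
qed

lemma lemB:
  fixes t w :: real
  assumes v: "v \<in> V" and t: "t > 0"
  shows "exp (-w) * (\<Sum>I\<in>IS. ((1+w) - ln (1+t) * (1+t) / t * real (card (I \<inter> nb v))) * t^card I)
           \<le> (\<Sum>I\<in>{I\<in>IS. I \<inter> nb v = {}}. t^card I)"
proof -
  define L where "L = ln (1+t)"
  define c where "c = L * (1+t) / t"
  have fA: "finite (Av v K)" for K unfolding Av_def nb_def using finV by simp
  have inner: "exp (-w) * (\<Sum>S\<in>Pow (Av v K). ((1+w) - c * real (card ((K \<union> S) \<inter> nb v))) * t^card (K \<union> S))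
      \<le> t ^ card K" if K: "K \<in> Ks v" for K
  proof -
    define a where "a = card (Av v K)"
    have KI: "K \<in> IS" and Kn: "K \<inter> nb v = {}" using K unfolding Ks_def by auto
    have fK: "finite K" using IS_fin[OF KI] .
    have eq1: "(K \<union> S) \<inter> nb v = S" and eq2: "card (K \<union> S) = card K + card S" if "S \<in> Pow (Av v K)" for S
    proof -
      have "S \<subseteq> nb v" using that unfolding Av_def by auto
      then show "(K \<union> S) \<inter> nb v = S" using Kn by auto
      have "finite S" using that fA finite_subset by auto
      moreover have "K \<inter> S = {}" using \<open>S \<subseteq> nb v\<close> Kn by auto
      ultimately show "card (K \<union> S) = card K + card S" using fK by (simp add: card_Un_disjoint)
    qed
    have "(\<Sum>S\<in>Pow (Av v K). ((1+w) - c * real (card ((K \<union> S) \<inter> nb v))) * t^card (K \<union> S))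
        = (\<Sum>S\<in>Pow (Av v K). t^card K * ((1+w) * t^card S - c * (real (card S) * t^card S)))"
      by (rule sum.cong) (auto simp: eq1 eq2 power_add algebra_simps)
    also have "\<dots> = t^card K * ((1+w) * (\<Sum>S\<in>Pow (Av v K). t^card S) - c * (\<Sum>S\<in>Pow (Av v K). real (card S) * t^card S))"
      by (simp add: sum_subtractf right_diff_distrib sum_distrib_left mult.assoc)
    also have "\<dots> = t^card K * ((1+t)^a * (1 + w - L * a))"
    proof -
      have P1: "(\<Sum>S\<in>Pow (Av v K). t^card S) = (1+t)^a" using pow_sums[OF fA] a_def by simp
      have P2: "(1+t) * (\<Sum>S\<in>Pow (Av v K). real (card S) * t^card S) = a * t * (1+t)^a" using pow_sums[OF fA] a_def by simp
      have "c * (\<Sum>S\<in>Pow (Av v K). real (card S) * t^card S) = L / t * ((1+t) * (\<Sum>S\<in>Pow (Av v K). real (card S) * t^card S))"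
        unfolding c_def by simp
      also have "\<dots> = L * a * (1+t)^a" unfolding P2 using t by simp
      finally show ?thesis unfolding P1 by (simp add: algebra_simps)
    qed
    finally have eq: "(\<Sum>S\<in>Pow (Av v K). ((1+w) - c * real (card ((K \<union> S) \<inter> nb v))) * t^card (K \<union> S))
        = t^card K * ((1+t)^a * (1 + w - L * a))" .
    have pw: "(1+t)^a = exp (L * a)" unfolding L_def using t
      by (subst mult.commute, subst exp_of_nat_mult) simp
    have "exp (-w) * ((1+t)^a * (1 + w - L * a)) = exp (L*a - w) * (1 + (w - L*a))"
      unfolding pw by (simp add: exp_diff exp_minus field_simps)
    also have "\<dots> \<le> exp (L*a - w) * exp (w - L*a)"
      by (rule mult_left_mono) auto
    also have "\<dots> = 1" by (simp add: exp_add[symmetric])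
    finally have "exp (-w) * ((1+t)^a * (1 + w - L * a)) \<le> 1" .
    then have "t^card K * (exp (-w) * ((1+t)^a * (1 + w - L * a))) \<le> t^card K * 1"
      by (rule mult_left_mono) (use t in simp)
    then show ?thesis unfolding eq by (simp add: algebra_simps)
  qed
  have "exp (-w) * (\<Sum>I\<in>IS. ((1+w) - c * real (card (I \<inter> nb v))) * t^card I)
      = (\<Sum>K\<in>Ks v. exp (-w) * (\<Sum>S\<in>Pow (Av v K). ((1+w) - c * real (card ((K \<union> S) \<inter> nb v))) * t^card (K \<union> S)))"
    unfolding decomp[OF v] by (simp add: sum_distrib_left)
  also have "\<dots> \<le> (\<Sum>K\<in>Ks v. t^card K)" by (rule sum_mono) (rule inner)
  finally show ?thesis unfolding c_def L_def Ks_def .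
qed

lemma main_ineq:
  fixes t w :: real
  assumes t: "t > 0" and w: "w > 0" and dw: "real d * ln (1+t) = w * exp w"
  shows "t * exp (-w) * real (card V) * (\<Sum>I\<in>IS. t^card I) \<le> (1+t) * (\<Sum>I\<in>IS. real (card I) * t^card I)"
proof -
  define L where "L = ln (1+t)"
  define c where "c = L * (1+t) / t"
  define Z where "Z = (\<Sum>I\<in>IS. t^card I)"
  define M where "M = (\<Sum>I\<in>IS. real (card I) * t^card I)"
  define n where "n = real (card V)"
  define Kv where "Kv v = (\<Sum>I\<in>{I\<in>IS. I \<inter> nb v = {}}. t^card I)" for v
  define Cv where "Cv v = (\<Sum>I\<in>IS. real (card (I \<inter> nb v)) * t^card I)" for v
  have 1: "(1+t) * M = t * (\<Sum>v\<in>V. Kv v)"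
    unfolding M_def sumA[symmetric] sum_distrib_left Kv_def using lemA by (simp add: sum_distrib_left)
  have 2: "exp (-w) * ((1+w) * Z - c * Cv v) \<le> Kv v" if "v \<in> V" for v
  proof -
    have "(\<Sum>I\<in>IS. ((1+w) - c * real (card (I \<inter> nb v))) * t^card I) = (1+w) * Z - c * Cv v"
      unfolding Z_def Cv_def by (simp add: left_diff_distrib sum_subtractf sum_distrib_left mult.assoc)
    then show ?thesis using lemB[OF that t, of w] unfolding Kv_def c_def L_def by simp
  qed
  have "(\<Sum>v\<in>V. exp (-w) * ((1+w) * Z - c * Cv v)) \<le> (\<Sum>v\<in>V. Kv v)"
    by (rule sum_mono) (rule 2)
  moreover have "(\<Sum>v\<in>V. exp (-w) * ((1+w) * Z - c * Cv v)) = exp (-w) * ((1+w) * n * Z - c * (\<Sum>v\<in>V. Cv v))"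
    unfolding n_def by (simp add: sum_distrib_left sum_subtractf algebra_simps)
  moreover have "(\<Sum>v\<in>V. Cv v) \<le> real d * M" unfolding Cv_def M_def using lemC t by simp
  moreover have "c \<ge> 0" unfolding c_def L_def using t by simp
  ultimately have 3: "exp (-w) * ((1+w) * n * Z - c * (real d * M)) \<le> (\<Sum>v\<in>V. Kv v)"
    by (smt (verit, best) exp_gt_zero mult_left_mono)
  have cd: "exp (-w) * c * real d = w * (1+t) / t"
  proof -
    have "exp (-w) * c * real d = exp (-w) * (real d * L) * (1+t) / t" unfolding c_def by simp
    also have "\<dots> = w * (1+t) / t" unfolding L_def dw by (simp add: exp_minus field_simps)
    finally show ?thesis .
  qed
  have "t * (exp (-w) * ((1+w) * n * Z - c * (real d * M))) \<le> (1+t) * M"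
    using 3 1 t by (simp add: mult_left_mono)
  then have "t * exp (-w) * (1+w) * n * Z - t * (exp (-w) * c * real d) * M \<le> (1+t) * M"
    by (simp add: algebra_simps)
  then have "t * exp (-w) * (1+w) * n * Z - w * (1+t) * M \<le> (1+t) * M"
    unfolding cd using t by simp
  then have "(1+w) * (t * exp (-w) * n * Z) \<le> (1+w) * ((1+t) * M)" by (simp add: algebra_simps)
  then have "t * exp (-w) * n * Z \<le> (1+t) * M" using w by simp
  then show ?thesis unfolding n_def Z_def M_def .
qed

end

lemma xexp_strict_mono:
  fixes x y :: real
  assumes "0 \<le> x" "x < y" shows "x * exp x < y * exp y"
proof -
  have "x * exp x \<le> x * exp y" using assms by (intro mult_left_mono) auto
  also have "\<dots> < y * exp y" using assms by (intro mult_strict_right_mono) auto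
  finally show ?thesis .
qed

lemma lambertW_prop:
  fixes z :: real
  assumes z: "z > 0"
  shows "lambertW z > 0 \<and> lambertW z * exp (lambertW z) = z"
proof -
  have "\<exists>x. 0 \<le> x \<and> x \<le> z \<and> x * exp x = z"
  proof (rule IVT)
    show "0 * exp 0 \<le> z" using z by simp
    have "z * 1 \<le> z * exp z" using z by (intro mult_left_mono) auto
    then show "z \<le> z * exp z" by simp
    show "0 \<le> z" using z by simp
    show "\<forall>x. 0 \<le> x \<and> x \<le> z \<longrightarrow> isCont (\<lambda>x. x * exp x) x" by (auto intro!: continuous_intros)
  qed
  then obtain x where x: "0 \<le> x" "x * exp x = z" by auto
  have xp: "x > 0" using x z by (cases "x = 0") auto
  have "(THE w. w > 0 \<and> w * exp w = z) = x"
  proof (rule the_equality)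
    show "x > 0 \<and> x * exp x = z" using xp x by simp
    fix w assume w: "w > 0 \<and> w * exp w = z"
    show "w = x"
    proof (rule ccontr)
      assume "w \<noteq> x"
      then have "w < x \<or> x < w" by auto
      then show False using xexp_strict_mono[of w x] xexp_strict_mono[of x w] w x xp by auto
    qed
  qed
  then show ?thesis unfolding lambertW_def using xp x by simp
qed

lemma lambertW_ge:
  fixes z a :: real
  assumes z: "z > 0" and a: "a > 0" "a * exp a \<le> z"
  shows "a \<le> lambertW z"
proof (rule ccontr)
  assume "\<not> a \<le> lambertW z"
  then have "lambertW z * exp (lambertW z) < a * exp a"
    using xexp_strict_mono[of "lambertW z" a] lambertW_prop[OF z] by auto
  then show False using lambertW_prop[OF z] a by simp
qed


context tfg begin

lemma P_ge1: "t \<ge> (0::real) \<Longrightarrow> 1 \<le> (\<Sum>I\<in>IS. t^card I)"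
proof -
  assume t: "t \<ge> 0"
  have e: "{} \<in> IS" by (simp add: IS_def independent_set_def)
  have "(\<lambda>I. t^card I) {} \<le> (\<Sum>I\<in>IS. t^card I)"
    using member_le_sum[OF e, of "\<lambda>I. t^card I"] t finite_IS by auto
  then show ?thesis by simp
qed

lemma P_0: "(\<Sum>I\<in>IS. (0::real)^card I) = 1"
proof -
  have "(\<Sum>I\<in>IS. (0::real)^card I) = (\<Sum>I\<in>IS. if I = {} then 1 else 0)"
    by (rule sum.cong) (auto simp: IS_fin card_eq_0_iff)
  also have "\<dots> = 1" using finite_IS by (simp add: sum.delta IS_def independent_set_def)
  finally show ?thesis .
qed

lemma part1:
  fixes lam :: real
  assumes d1: "d \<ge> 1" and lam: "lam > 0"
  shows "exp ((lambertW (real d * ln (1 + lam)) ^ 2 + 2 * lambertW (real d * ln (1 + lam))) * real (card V) / (2 * real d))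
           \<le> (\<Sum>I\<in>IS. lam^card I)"
proof -
  define W0 where "W0 = lambertW (real d * ln (1 + lam))"
  have W0: "W0 > 0" "W0 * exp W0 = real d * ln (1 + lam)"
    unfolding W0_def using lambertW_prop[of "real d * ln (1 + lam)"] d1 lam by auto
  define n where "n = real (card V)"
  define P where "P t = (\<Sum>I\<in>IS. t^card I)" for t :: real
  define P' where "P' t = (\<Sum>I\<in>IS. real (card I) * t^(card I - 1))" for t :: real
  define \<tau> where "\<tau> x = exp (x * exp x / real d) - 1" for x :: real
  define \<tau>' where "\<tau>' x = exp (x * exp x / real d) * ((exp x + x * exp x) / real d)" for x :: real
  define G where "G x = ln (P (\<tau> x)) - n * (x^2 + 2*x) / (2 * real d)" for x
  define G' where "G' x = inverse (P (\<tau> x)) * (P' (\<tau> x) * \<tau>' x) - n * (2*x + 2) / (2 * real d)" for x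
  have dP: "DERIV P t :> P' t" for t
    unfolding P_def P'_def by (rule DERIV_sum) (metis DERIV_pow One_nat_def)
  have d\<tau>: "DERIV \<tau> x :> \<tau>' x" for x
    unfolding \<tau>_def \<tau>'_def using d1 by (auto intro!: derivative_eq_intros simp: field_simps)
  have \<tau>nn: "x \<ge> 0 \<Longrightarrow> \<tau> x \<ge> 0" for x unfolding \<tau>_def by simp
  have Ppos: "x \<ge> 0 \<Longrightarrow> P (\<tau> x) > 0" for x
    using P_ge1[OF \<tau>nn[of x]] unfolding P_def by simp
  have dG: "DERIV G x :> G' x" if x: "x \<ge> 0" for x
  proof -
    have "DERIV (\<lambda>x. ln (P (\<tau> x))) x :> inverse (P (\<tau> x)) * (P' (\<tau> x) * \<tau>' x)"
      using DERIV_chain2[where f=ln and g="\<lambda>x. P (\<tau> x)" and x=x, OF DERIV_ln[OF Ppos[OF x]] DERIV_chain2[where f=P and g=\<tau> and x=x, OF dP d\<tau>]] by simp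
    moreover have "DERIV (\<lambda>x. n * (x^2 + 2*x) / (2 * real d)) x :> n * (2*x + 2) / (2 * real d)"
      using d1 by (auto intro!: derivative_eq_intros simp: field_simps)
    ultimately have "DERIV (\<lambda>x. ln (P (\<tau> x)) - n * (x^2 + 2*x) / (2 * real d)) x :> G' x"
      unfolding G'_def by (rule DERIV_diff)
    moreover have "G = (\<lambda>x. ln (P (\<tau> x)) - n * (x^2 + 2*x) / (2 * real d))" using G_def by auto
    ultimately show ?thesis by simp
  qed
  have G'nn: "G' x \<ge> 0" if x: "x > 0" for x
  proof -
    define t where "t = \<tau> x"
    have t: "t > 0" unfolding t_def \<tau>_def using x d1 by simp
    have ln1t: "real d * ln (1+t) = x * exp x" unfolding t_def \<tau>_def using d1 by simp
    have M: "(\<Sum>I\<in>IS. real (card I) * t^card I) = t * P' t"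
      unfolding P'_def sum_distrib_left
    proof (rule sum.cong)
      fix I show "real (card I) * t ^ card I = t * (real (card I) * t ^ (card I - 1))"
        by (cases "card I") auto
    qed simp
    have "t * exp (-x) * n * P t \<le> (1+t) * (t * P' t)"
      using main_ineq[OF t x ln1t] unfolding M n_def P_def .
    then have "t * (exp (-x) * n * P t) \<le> t * ((1+t) * P' t)" by (simp add: algebra_simps)
    then have key: "exp (-x) * n * P t \<le> (1+t) * P' t" using t by (rule mult_left_le_imp_le)
    have Pt: "P t > 0" using Ppos x unfolding t_def by simp
    have e1: "exp (x * exp x / real d) = 1 + t" unfolding t_def \<tau>_def by simp
    have "G' x = (1+x) / real d * ((1+t) * P' t * exp x / P t - n)"
      unfolding G'_def \<tau>'_def e1 t_def[symmetric] using d1 Pt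
      by (simp add: field_simps)
    moreover have "(1+t) * P' t * exp x / P t - n \<ge> 0"
    proof -
      have "exp (-x) * n * P t * exp x \<le> (1+t) * P' t * exp x" using key by simp
      then have "n * P t \<le> (1+t) * P' t * exp x" by (simp add: exp_minus field_simps)
      then show ?thesis using Pt by (simp add: field_simps)
    qed
    moreover have "(1+x) / real d \<ge> 0" using x by simp
    ultimately show ?thesis by (metis mult_nonneg_nonneg)
  qed
  have "G 0 \<le> G W0"
  proof (rule DERIV_nonneg_imp_increasing_open[of 0 W0 G])
    show "0 \<le> W0" using W0 by simp
    show "\<exists>y. DERIV G x :> y \<and> 0 \<le> y" if "0 < x" "x < W0" for x
      using dG[of x] G'nn[of x] that by auto
    show "continuous_on {0..W0} G"
      by (rule DERIV_continuous_on[where D = G']) (use dG in \<open>auto intro: has_field_derivative_at_within\<close>)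
  qed
  moreover have "G 0 = 0" unfolding G_def \<tau>_def P_def using P_0 by simp
  moreover have "\<tau> W0 = lam" unfolding \<tau>_def using W0 d1 lam by simp
  ultimately have "n * (W0^2 + 2*W0) / (2 * real d) \<le> ln (P lam)" unfolding G_def by simp
  then have "exp (n * (W0^2 + 2*W0) / (2 * real d)) \<le> P lam"
    using Ppos[of W0] W0 \<open>\<tau> W0 = lam\<close> by (simp add: ln_ge_iff)
  then show ?thesis unfolding P_def n_def W0_def by (simp add: mult.commute)
qed

end


lemma part1_gen:
  fixes V :: "'a set" and lam :: real
  assumes "d \<ge> 1" "simple_graph V E" "triangle_free V E" "max_degree_eq V E d" "lam > 0"
  shows "hardcore_pf V E lam \<ge> exp ((lambertW (real d * ln (1 + lam)) ^ 2 + 2 * lambertW (real d * ln (1 + lam))) * real (card V) / (2 * real d))"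
proof -
  interpret tfg V E d using assms by (unfold_locales) (auto simp: max_degree_eq_def)
  show ?thesis using part1[OF assms(1,5)] unfolding hardcore_pf_def IS_def .
qed

lemma exp_ge_sq4:
  fixes s :: real assumes "s \<ge> 0" shows "s^2 / 4 \<le> exp s"
proof -
  have "s/2 \<le> 1 + s/2" by simp
  also have "\<dots> \<le> exp (s/2)" by (rule exp_ge_add_one_self)
  finally have h: "s/2 \<le> exp (s/2)" .
  have "(s/2)^2 \<le> (exp (s/2))^2" using h assms by (intro power_mono) auto
  also have "(exp (s/2))^2 = exp s" by (simp add: power2_eq_square exp_add[symmetric])
  finally show ?thesis by (simp add: power2_eq_square)
qed

lemma part2:
  fixes \<epsilon> :: real
  assumes e: "\<epsilon> > 0"
  shows "\<exists>d0 :: nat. \<forall>d \<ge> d0. \<forall>(V :: nat set) E.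
            simple_graph V E \<and> triangle_free V E \<and> max_degree_eq V E d \<longrightarrow>
            real (card {J. independent_set V E J})
              \<ge> exp ((1/2 - \<epsilon>) * (ln (real d))^2 / real d * real (card V))"
proof -
  define Y where "Y = 4 / (ln 2 * \<epsilon>^2)"
  define d0 where "d0 = nat \<lceil>exp Y\<rceil> + 2"
  show ?thesis
  proof (intro exI allI impI, elim conjE)
    fix d :: nat and V :: "nat set" and E
    assume dd: "d0 \<le> d" and G: "simple_graph V E" "triangle_free V E" "max_degree_eq V E d"
    have d2: "real d \<ge> 2" using dd unfolding d0_def by simp
    have d1: "d \<ge> 1" using d2 by simp
    interpret tfg V E d using G by (unfold_locales) (auto simp: max_degree_eq_def)
    define w where "w = lambertW (real d * ln (1 + 1))"
    have wpos: "w > 0" unfolding w_def using lambertW_prop[of "real d * ln (1+1)"] d1 by simp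
    have P1: "exp ((w^2 + 2*w) * real (card V) / (2 * real d)) \<le> real (card {J. independent_set V E J})"
    proof -
      have "exp ((w^2 + 2*w) * real (card V) / (2 * real d)) \<le> (\<Sum>I\<in>IS. 1^card I)"
        using part1[OF d1, of 1] unfolding w_def by simp
      also have "\<dots> = real (card {J. independent_set V E J})" by (simp add: IS_def)
      finally show ?thesis .
    qed
    define y where "y = ln (real d)"
    have ypos: "y > 0" unfolding y_def using d2 by simp
    show "real (card {J. independent_set V E J}) \<ge> exp ((1/2 - \<epsilon>) * (ln (real d))^2 / real d * real (card V))"
    proof (cases "\<epsilon> \<ge> 1/2")
      case True
      have "(1/2 - \<epsilon>) * (ln (real d))^2 / real d * real (card V) \<le> 0"
        using True d2 by (intro mult_nonpos_nonneg divide_nonpos_nonneg mult_nonpos_nonneg) auto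
      moreover have "0 \<le> (w^2 + 2*w) * real (card V) / (2 * real d)" using wpos by simp
      ultimately show ?thesis using P1 by (smt (verit) exp_le_cancel_iff)
    next
      case False
      define a where "a = (1 - \<epsilon>) * y"
      have apos: "a > 0" unfolding a_def using False ypos by simp
      have yY: "y \<ge> Y"
      proof -
        have "exp Y \<le> real d" using dd unfolding d0_def by linarith
        then show ?thesis unfolding y_def using d2 by (simp add: ln_ge_iff)
      qed
      have Ypos: "Y > 0" unfolding Y_def using e by simp
      have "(1 - \<epsilon>) * y \<le> y" using e ypos by simp
      also have "y \<le> ln 2 * ((\<epsilon> * y)^2 / 4)"
      proof -
        have "y * 1 \<le> y * (ln 2 * \<epsilon>^2 * y / 4)"
        proof (rule mult_left_mono)
          have "ln 2 * \<epsilon>^2 * Y / 4 = 1" unfolding Y_def using e by (simp add: field_simps)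
          moreover have "ln 2 * \<epsilon>^2 * Y / 4 \<le> ln 2 * \<epsilon>^2 * y / 4" using yY e by (intro divide_right_mono mult_left_mono) auto
          ultimately show "1 \<le> ln 2 * \<epsilon>^2 * y / 4" by simp
        qed (use ypos in simp)
        then show ?thesis by (simp add: power2_eq_square algebra_simps)
      qed
      also have "\<dots> \<le> ln 2 * exp (\<epsilon> * y)" using exp_ge_sq4[of "\<epsilon> * y"] e ypos by simp
      finally have h: "(1 - \<epsilon>) * y \<le> ln 2 * exp (\<epsilon> * y)" .
      have "a * exp a \<le> ln 2 * exp (\<epsilon> * y) * exp a" unfolding a_def using h by (simp add: mult_right_mono)
      also have "\<dots> = ln 2 * exp y" unfolding a_def by (simp add: exp_add[symmetric] algebra_simps)
      also have "\<dots> = real d * ln (1+1)" unfolding y_def using d2 by simp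
      finally have "a \<le> w" unfolding w_def using lambertW_ge apos d1 by simp
      then have "a^2 \<le> w^2" using apos by (intro power_mono) auto
      moreover have "(1 - 2*\<epsilon>) * y^2 \<le> a^2" unfolding a_def using e ypos by (simp add: power2_eq_square algebra_simps)
      ultimately have "(1 - 2*\<epsilon>) * y^2 \<le> w^2 + 2*w" using wpos by simp
      then have "(1 - 2*\<epsilon>) * y^2 * real (card V) / (2 * real d) \<le> (w^2 + 2*w) * real (card V) / (2 * real d)"
        using d2 by (intro divide_right_mono mult_right_mono) auto
      moreover have "(1/2 - \<epsilon>) * (ln (real d))^2 / real d * real (card V) = (1 - 2*\<epsilon>) * y^2 * real (card V) / (2 * real d)"
        unfolding y_def by (simp add: field_simps)
      ultimately show ?thesis using P1 by (smt (verit) exp_le_cancel_iff)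
    qed
  qed
qed

theorem theorem1p5:
  shows "(\<forall>(V :: 'a set) E (d :: nat) (lam :: real).
            d \<ge> 1 \<and> simple_graph V E \<and> triangle_free V E \<and> max_degree_eq V E d \<and> lam > 0 \<longrightarrow>
            (let w = lambertW (real d * ln (1 + lam))
             in hardcore_pf V E lam \<ge> exp ((w^2 + 2*w) * real (card V) / (2 * real d))))
       \<and> (\<forall>\<epsilon> :: real. \<epsilon> > 0 \<longrightarrow> (\<exists>d0 :: nat. \<forall>d \<ge> d0. \<forall>(V :: nat set) E.
            simple_graph V E \<and> triangle_free V E \<and> max_degree_eq V E d \<longrightarrow>
            real (card {J. independent_set V E J})
              \<ge> exp ((1/2 - \<epsilon>) * (ln (real d))^2 / real d * real (card V))))"
  using part1_gen part2 by (auto simp: Let_def)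

end
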